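(* Let $M$ be a finite abelian group of order $m$, $J\colon M\times M\to\mathbf{C}$, and $i\colon\hat{M}\to\hat{M}$ a bijection with $i(x)=x\,i(x^{-1})$ for all $x$, such that $J(\alpha,\beta)=\frac{1}{m}\sum_{x\in\hat{M}}\alpha(i(x))\beta(i(x)x^{-1})$ for all $\alpha,\beta\in M$. Define $x\oplus y=x\,i(x/y)^{-1}$ for $x,y\in\hat{M}$. Then \[ J(\alpha,\beta)=\frac{1}{m}\sum_{\substack{x\oplus y=1,\\ x,y\in\hat{M}}}\alpha(x)\beta(y)\quad\text{for all }\alpha,\beta\in M. \]
   Context: $\hat{M}$ is the Pontryagin dual of $M$, written multiplicatively with identity $1$; for $\alpha\in M$, $x\in\hat{M}$, $\alpha(x)$ is the value of the character $x$ at $\alpha$. (In the paper, $J$ is a Jacobi function, but this is not used.) *)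

theory Defs
  imports Complex_Main
begin

text \<open>The finite abelian group M is a type of class ab_group_add (written additively),
  combined with class finite.\<close>

definition dual :: "('a::ab_group_add \<Rightarrow> complex) set" where
  "dual = {\<chi>. (\<forall>a. cmod (\<chi> a) = 1) \<and> (\<forall>a b. \<chi> (a + b) = \<chi> a * \<chi> b)}"

definition dmult :: "('a \<Rightarrow> complex) \<Rightarrow> ('a \<Rightarrow> complex) \<Rightarrow> ('a \<Rightarrow> complex)" where
  "dmult x y = (\<lambda>a. x a * y a)"

definition dinv :: "('a \<Rightarrow> complex) \<Rightarrow> ('a \<Rightarrow> complex)" where
  "dinv x = (\<lambda>a. inverse (x a))"

definition dunit :: "'a \<Rightarrow> complex" where
  "dunit = (\<lambda>a. 1)"

definition doplus :: "(('a \<Rightarrow> complex) \<Rightarrow> ('a \<Rightarrow> complex)) \<Rightarrow> ('a \<Rightarrow> complex) \<Rightarrow> ('a \<Rightarrow> complex) \<Rightarrow> ('a \<Rightarrow> complex)" where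
  "doplus i x y = dmult x (dinv (i (dmult x (dinv y))))"

end

theory Submission
  imports Defs
begin

lemma dual_nz: "x \<in> dual \<Longrightarrow> x a \<noteq> 0"
  unfolding dual_def by (metis (mono_tags, lifting) mem_Collect_eq norm_zero zero_neq_one)

lemma dual_mult: "x \<in> dual \<Longrightarrow> y \<in> dual \<Longrightarrow> dmult x y \<in> dual"
  unfolding dual_def dmult_def by (auto simp: norm_mult)

lemma dual_inv: "x \<in> dual \<Longrightarrow> dinv x \<in> dual"
  unfolding dual_def dinv_def by (auto simp: norm_inverse)

lemma dual_div: "x \<in> dual \<Longrightarrow> y \<in> dual \<Longrightarrow> dmult x (dinv y) \<in> dual"
  by (simp add: dual_mult dual_inv)

theorem mainTheorem15:
  fixes J :: "'a::{ab_group_add, finite} \<Rightarrow> 'a \<Rightarrow> complex"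
    and i :: "('a \<Rightarrow> complex) \<Rightarrow> ('a \<Rightarrow> complex)"
  assumes bij: "bij_betw i dual dual"
    and ix: "\<forall>x\<in>dual. i x = dmult x (i (dinv x))"
    and J: "\<forall>\<alpha> \<beta>. J \<alpha> \<beta> = (1 / of_nat (card (UNIV :: 'a set))) *
              (\<Sum>x\<in>dual. i x \<alpha> * dmult (i x) (dinv x) \<beta>)"
  shows "\<forall>\<alpha> \<beta>. J \<alpha> \<beta> = (1 / of_nat (card (UNIV :: 'a set))) *
              (\<Sum>(x, y)\<in>{(x, y). x \<in> dual \<and> y \<in> dual \<and> doplus i x y = dunit}. x \<alpha> * y \<beta>)"
proof (intro allI)
  fix \<alpha> \<beta> :: 'a
  have iD: "x \<in> dual \<Longrightarrow> i x \<in> dual" for x using bij_betw_apply[OF bij] .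
  have key: "doplus i u v = dunit \<longleftrightarrow> i (dmult u (dinv v)) = u"
    if u: "u \<in> dual" and v: "v \<in> dual" for u v :: "'a \<Rightarrow> complex"
  proof -
    have w: "i (dmult u (dinv v)) \<in> dual" using iD dual_div u v by blast
    show ?thesis
    proof
      assume "doplus i u v = dunit"
      hence "\<And>a. u a * inverse (i (dmult u (dinv v)) a) = 1"
        unfolding doplus_def dmult_def dinv_def dunit_def by meson
      hence "\<And>a. i (dmult u (dinv v)) a = u a"
        using dual_nz[OF w] by (metis divide_inverse divide_eq_1_iff)
      thus "i (dmult u (dinv v)) = u" by auto
    next
      assume "i (dmult u (dinv v)) = u"
      thus "doplus i u v = dunit"
        unfolding doplus_def dmult_def dinv_def dunit_def using dual_nz[OF u] by auto
    qed
  qed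
  have "(\<Sum>(x, y)\<in>{(x, y). x \<in> dual \<and> y \<in> dual \<and> doplus i x y = dunit}. x \<alpha> * y \<beta>)
      = (\<Sum>x\<in>dual. i x \<alpha> * dmult (i x) (dinv x) \<beta>)"
  proof (rule sum.reindex_bij_witness[where i = "\<lambda>x. (i x, dmult (i x) (dinv x))"
        and j = "\<lambda>(u,v). dmult u (dinv v)"])
    fix a assume "a \<in> {(x, y). x \<in> dual \<and> y \<in> dual \<and> doplus i x y = dunit}"
    then obtain u v where a: "a = (u,v)" "u \<in> dual" "v \<in> dual" "doplus i u v = dunit" by auto
    hence iu: "i (dmult u (dinv v)) = u" using key by blast
    have vv: "dmult u (dinv (dmult u (dinv v))) = v"
      using dual_nz[OF a(2)] dual_nz[OF a(3)] by (auto simp: dmult_def dinv_def)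
    show "(\<lambda>x. (i x, dmult (i x) (dinv x))) ((\<lambda>(u,v). dmult u (dinv v)) a) = a"
      using a(1) iu vv by simp
    show "(\<lambda>(u,v). dmult u (dinv v)) a \<in> dual" using a dual_div by auto
    show "i ((\<lambda>(u,v). dmult u (dinv v)) a) \<alpha> * dmult (i ((\<lambda>(u,v). dmult u (dinv v)) a)) (dinv ((\<lambda>(u,v). dmult u (dinv v)) a)) \<beta> = (case a of (x, y) \<Rightarrow> x \<alpha> * y \<beta>)"
      using a(1) iu vv by simp
  next
    fix b assume b: "b \<in> (dual :: ('a \<Rightarrow> complex) set)"
    have ib: "i b \<in> dual" using iD b by blast
    have e: "dmult (i b) (dinv (dmult (i b) (dinv b))) = b"
      using dual_nz[OF ib] dual_nz[OF b] by (auto simp: dmult_def dinv_def)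
    show "(\<lambda>(u,v). dmult u (dinv v)) ((\<lambda>x. (i x, dmult (i x) (dinv x))) b) = b"
      using e by simp
    have "doplus i (i b) (dmult (i b) (dinv b)) = dunit"
      using key[OF ib dual_div[OF ib b]] e by simp
    thus "(\<lambda>x. (i x, dmult (i x) (dinv x))) b \<in> {(x, y). x \<in> dual \<and> y \<in> dual \<and> doplus i x y = dunit}"
      using ib dual_div[OF ib b] by simp
  qed
  thus "J \<alpha> \<beta> = (1 / of_nat (card (UNIV :: 'a set))) *
              (\<Sum>(x, y)\<in>{(x, y). x \<in> dual \<and> y \<in> dual \<and> doplus i x y = dunit}. x \<alpha> * y \<beta>)"
    using J by simp
qed

end
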